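(* Let $(X,0)$ be a pointed CFG-space over a Boolean algebra $B$ and let $U\subset X$ be a subset which is a CFG-space with the restricted metric and satisfies $0\in U$. Then for every $n\in\mathbb{N}$, $$\alpha_n(X)=\bigvee_{i=0}^{n}\alpha_i(U)\wedge\alpha_{n-i}(U^\perp).$$
   Context: A Boolean metric space over $B$ is a set $X$ with symmetric $d:X\times X\to B$, $d(x,y)=0$ iff $x=y$, and $d(x,z)\le d(x,y)\vee d(y,z)$. A partition of $B$ is a finite family of pairwise disjoint elements with supremum $1$; $x$ is a convex combination of $x_0,\dots,x_n$ with coefficients a partition $a_0,\dots,a_n$ if $a_i\wedge d(x,x_i)=0$ for all $i$. A CFG-space is a Boolean metric space that is convex (every such convex combination of its points exists in it) and finitely generated (some finite subset $S$ has every point as a convex combination of points of $S$). For a pointed space $(X,0)$ write $|x|=d(x,0)$; $x\perp y$ means $d(x,y)=|x|\vee|y|$; for $0\in U\subset X$, $U^\perp=\{y\in X: x\perp y\ \forall x\in U\}$. For a space $Y$ and integer $k>0$, $\alpha_k(Y)=\sup\{\bigwedge_{0\le i<j\le k}d(u_i,u_j): u_0,\dots,u_k\in Y\}$ (for CFG-spaces this supremum exists and is attained), and by convention $\alpha_0(Y)=1$. *)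

theory Defs
  imports Main
begin

definition bool_metric :: "'a set \<Rightarrow> ('a \<Rightarrow> 'a \<Rightarrow> 'b::boolean_algebra) \<Rightarrow> bool" where
  "bool_metric X d \<longleftrightarrow>
     (\<forall>x\<in>X. \<forall>y\<in>X. d x y = d y x) \<and>
     (\<forall>x\<in>X. \<forall>y\<in>X. d x y = bot \<longleftrightarrow> x = y) \<and>
     (\<forall>x\<in>X. \<forall>y\<in>X. \<forall>z\<in>X. d x z \<le> sup (d x y) (d y z))"

definition is_partition :: "nat \<Rightarrow> (nat \<Rightarrow> 'b::boolean_algebra) \<Rightarrow> bool" where
  "is_partition n a \<longleftrightarrow>
     (\<forall>i\<le>n. \<forall>j\<le>n. i \<noteq> j \<longrightarrow> inf (a i) (a j) = bot) \<and>
     Sup_fin (a ` {..n}) = top"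

definition convex_comb ::
  "('a \<Rightarrow> 'a \<Rightarrow> 'b::boolean_algebra) \<Rightarrow> 'a \<Rightarrow> nat \<Rightarrow> (nat \<Rightarrow> 'a) \<Rightarrow> (nat \<Rightarrow> 'b) \<Rightarrow> bool" where
  "convex_comb d x n xs a \<longleftrightarrow> is_partition n a \<and> (\<forall>i\<le>n. inf (a i) (d x (xs i)) = bot)"

definition convex_space :: "'a set \<Rightarrow> ('a \<Rightarrow> 'a \<Rightarrow> 'b::boolean_algebra) \<Rightarrow> bool" where
  "convex_space X d \<longleftrightarrow>
     (\<forall>n xs a. (\<forall>i\<le>n. xs i \<in> X) \<and> is_partition n a \<longrightarrow> (\<exists>x\<in>X. convex_comb d x n xs a))"

definition fin_generated :: "'a set \<Rightarrow> ('a \<Rightarrow> 'a \<Rightarrow> 'b::boolean_algebra) \<Rightarrow> bool" where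
  "fin_generated X d \<longleftrightarrow>
     (\<exists>S. finite S \<and> S \<subseteq> X \<and>
        (\<forall>x\<in>X. \<exists>n xs a. (\<forall>i\<le>n. xs i \<in> S) \<and> convex_comb d x n xs a))"

definition CFG_space :: "'a set \<Rightarrow> ('a \<Rightarrow> 'a \<Rightarrow> 'b::boolean_algebra) \<Rightarrow> bool" where
  "CFG_space X d \<longleftrightarrow> bool_metric X d \<and> convex_space X d \<and> fin_generated X d"

text \<open>Orthogonality in a pointed space with base point p: |x| = d x p.\<close>
definition orth :: "('a \<Rightarrow> 'a \<Rightarrow> 'b::boolean_algebra) \<Rightarrow> 'a \<Rightarrow> 'a \<Rightarrow> 'a \<Rightarrow> bool" where
  "orth d p x y \<longleftrightarrow> d x y = sup (d x p) (d y p)"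

definition orth_compl :: "'a set \<Rightarrow> ('a \<Rightarrow> 'a \<Rightarrow> 'b::boolean_algebra) \<Rightarrow> 'a \<Rightarrow> 'a set \<Rightarrow> 'a set" where
  "orth_compl X d p U = {y\<in>X. \<forall>x\<in>U. orth d p x y}"

definition is_lub :: "'b::order set \<Rightarrow> 'b \<Rightarrow> bool" where
  "is_lub A s \<longleftrightarrow> (\<forall>a\<in>A. a \<le> s) \<and> (\<forall>t. (\<forall>a\<in>A. a \<le> t) \<longrightarrow> s \<le> t)"

definition alpha :: "'a set \<Rightarrow> ('a \<Rightarrow> 'a \<Rightarrow> 'b::boolean_algebra) \<Rightarrow> nat \<Rightarrow> 'b" where
  "alpha Y d k = (if k = 0 then top else
     (THE s. is_lub {Inf_fin {d (u i) (u j) | i j. i < j \<and> j \<le> k} | u. \<forall>i\<le>k. u i \<in> Y} s))"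

end

theory Submission
  imports Defs
begin


definition filt :: "'b::boolean_algebra set \<Rightarrow> bool" where
  "filt F \<longleftrightarrow> top \<in> F \<and> bot \<notin> F \<and> (\<forall>x\<in>F. \<forall>y. x \<le> y \<longrightarrow> y \<in> F) \<and> (\<forall>x\<in>F. \<forall>y\<in>F. inf x y \<in> F)"

definition uhom :: "('b::boolean_algebra \<Rightarrow> bool) \<Rightarrow> bool" where
  "uhom P \<longleftrightarrow> P top \<and> \<not> P bot \<and> (\<forall>x y. P (inf x y) = (P x \<and> P y)) \<and> (\<forall>x. P (- x) = (\<not> P x))"

lemma uhom_inf: "uhom P \<Longrightarrow> P (inf x y) = (P x \<and> P y)" by (simp add: uhom_def)
lemma uhom_top: "uhom P \<Longrightarrow> P top" by (simp add: uhom_def)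
lemma uhom_bot: "uhom P \<Longrightarrow> \<not> P bot" by (simp add: uhom_def)
lemma uhom_neg: "uhom P \<Longrightarrow> P (- x) = (\<not> P x)" by (simp add: uhom_def)
lemma uhom_sup: "uhom P \<Longrightarrow> P (sup x y) = (P x \<or> P y)"
proof -
  assume h: "uhom P"
  have "P (sup x y) = P (- inf (- x) (- y))" by simp
  also have "\<dots> = (\<not> (\<not> P x \<and> \<not> P y))" by (simp only: uhom_neg[OF h] uhom_inf[OF h])
  also have "\<dots> = (P x \<or> P y)" by blast
  finally show ?thesis .
qed
lemma uhom_mono: "uhom P \<Longrightarrow> x \<le> y \<Longrightarrow> P x \<Longrightarrow> P y"
  by (metis inf.absorb_iff1 uhom_inf)

lemma uhom_Sup_fin: "finite A \<Longrightarrow> A \<noteq> {} \<Longrightarrow> uhom P \<Longrightarrow> P (Sup_fin A) = (\<exists>a\<in>A. P a)"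
proof (induction A rule: finite_ne_induct)
  case (singleton x) then show ?case by simp
next
  case (insert x F) then show ?case by (simp add: uhom_sup)
qed
lemma uhom_Inf_fin: "finite A \<Longrightarrow> A \<noteq> {} \<Longrightarrow> uhom P \<Longrightarrow> P (Inf_fin A) = (\<forall>a\<in>A. P a)"
proof (induction A rule: finite_ne_induct)
  case (singleton x) then show ?case by simp
next
  case (insert x F) then show ?case by (simp add: uhom_inf)
qed

lemma filt_top: "filt F \<Longrightarrow> top \<in> F" by (simp add: filt_def)
lemma filt_bot: "filt F \<Longrightarrow> bot \<notin> F" by (simp add: filt_def)
lemma filt_up: "filt F \<Longrightarrow> x \<in> F \<Longrightarrow> x \<le> y \<Longrightarrow> y \<in> F" unfolding filt_def by blast
lemma filt_inf: "filt F \<Longrightarrow> x \<in> F \<Longrightarrow> y \<in> F \<Longrightarrow> inf x y \<in> F" unfolding filt_def by blast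
lemma filtI: "top \<in> F \<Longrightarrow> bot \<notin> F \<Longrightarrow> (\<And>x y. x \<in> F \<Longrightarrow> x \<le> y \<Longrightarrow> y \<in> F)
  \<Longrightarrow> (\<And>x y. x \<in> F \<Longrightarrow> y \<in> F \<Longrightarrow> inf x y \<in> F) \<Longrightarrow> filt F"
  unfolding filt_def by blast

lemma chain_ub:
  fixes c :: "'b::boolean_algebra"
  assumes "c \<noteq> bot" and C: "C \<in> chains {F. filt F \<and> c \<in> F}"
  shows "\<exists>U\<in>{F. filt F \<and> c \<in> F}. \<forall>X\<in>C. X \<subseteq> U"
proof (cases "C = {}")
  case True
  have "filt {y. c \<le> y}"
  proof (rule filtI)
    show "top \<in> {y. c \<le> y}" by simp
    show "bot \<notin> {y. c \<le> y}" using assms by (simp add: bot_unique)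
    show "y \<in> {y. c \<le> y}" if "x \<in> {y. c \<le> y}" "x \<le> y" for x y
      using that by simp
    show "inf x y \<in> {y. c \<le> y}" if "x \<in> {y. c \<le> y}" "y \<in> {y. c \<le> y}" for x y
      using that by simp
  qed
  then show ?thesis using True by auto
next
  case False
  have CA: "\<And>F. F \<in> C \<Longrightarrow> filt F \<and> c \<in> F" using C unfolding chains_def by auto
  have ch: "\<And>F G. F \<in> C \<Longrightarrow> G \<in> C \<Longrightarrow> F \<subseteq> G \<or> G \<subseteq> F"
    using C unfolding chains_def chain_subset_def by auto
  obtain F0 where F0: "F0 \<in> C" using False by auto
  have "filt (\<Union>C)"
  proof (rule filtI)
    show "top \<in> \<Union>C" using F0 CA[OF F0] filt_top by auto
    show "bot \<notin> \<Union>C" using CA filt_bot by auto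
    show "y \<in> \<Union>C" if "x \<in> \<Union>C" "x \<le> y" for x y
      using that CA filt_up by blast
    show "inf x y \<in> \<Union>C" if "x \<in> \<Union>C" "y \<in> \<Union>C" for x y
    proof -
      from that(1) obtain F where F: "F \<in> C" "x \<in> F" by auto
      from that(2) obtain G where G: "G \<in> C" "y \<in> G" by auto
      show ?thesis
      proof (cases "F \<subseteq> G")
        case True then have "inf x y \<in> G" using F G CA[OF G(1)] filt_inf by auto
        then show ?thesis using G by auto
      next
        case False then have "G \<subseteq> F" using ch F G by auto
        then have "inf x y \<in> F" using F G CA[OF F(1)] filt_inf by auto
        then show ?thesis using F by auto
      qed
    qed
  qed
  moreover have "c \<in> \<Union>C" using F0 CA[OF F0] by auto
  ultimately show ?thesis by auto
qed

lemma filt_prime: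
  fixes M :: "'b::boolean_algebra set"
  assumes fM: "filt M" and max: "\<And>F. filt F \<Longrightarrow> M \<subseteq> F \<Longrightarrow> F = M"
  shows "x \<in> M \<or> - x \<in> M"
proof (rule ccontr)
  assume nx: "\<not> (x \<in> M \<or> - x \<in> M)"
  define M' where "M' = {y. \<exists>f\<in>M. inf f x \<le> y}"
  have M'I: "y \<in> M'" if "f \<in> M" "inf f x \<le> y" for f y
    unfolding M'_def using that by blast
  have M'E: "\<exists>f\<in>M. inf f x \<le> y" if "y \<in> M'" for y
    using that unfolding M'_def by blast
  have "bot \<notin> M'"
  proof
    assume "bot \<in> M'"
    then obtain f where f: "f \<in> M" "inf f x \<le> bot" using M'E by blast
    then have "inf f x = bot" using bot_unique by blast
    then have "f \<le> - x" by (simp add: inf_shunt)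
    then have "- x \<in> M" using filt_up[OF fM f(1)] by blast
    then show False using nx by blast
  qed
  have "filt M'"
  proof (rule filtI)
    show "top \<in> M'" using M'I[OF filt_top[OF fM]] by simp
    show "bot \<notin> M'" by fact
    show "z \<in> M'" if "y \<in> M'" "y \<le> z" for y z
    proof -
      from M'E[OF that(1)] obtain f where "f \<in> M" "inf f x \<le> y" by blast
      have "inf f x \<le> z" using \<open>inf f x \<le> y\<close> that(2) by (rule order_trans)
      then show ?thesis using \<open>f \<in> M\<close> M'I by blast
    qed
    show "inf y z \<in> M'" if "y \<in> M'" "z \<in> M'" for y z
    proof -
      from M'E[OF that(1)] obtain f where f: "f \<in> M" "inf f x \<le> y" by blast
      from M'E[OF that(2)] obtain g where g: "g \<in> M" "inf g x \<le> z" by blast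
      have e: "inf (inf f g) x = inf (inf f x) (inf g x)" by (simp add: inf_aci)
      have "inf (inf f x) (inf g x) \<le> inf y z" using f(2) g(2) by (rule inf_mono)
      then have "inf (inf f g) x \<le> inf y z" using e by simp
      moreover have "inf f g \<in> M" using filt_inf[OF fM f(1) g(1)] .
      ultimately show ?thesis using M'I by blast
    qed
  qed
  moreover have "M \<subseteq> M'"
  proof
    fix y assume "y \<in> M" then show "y \<in> M'" using M'I[of y y] by simp
  qed
  ultimately have "M' = M" by (rule max)
  moreover have "x \<in> M'" using M'I[OF filt_top[OF fM], of x] by simp
  ultimately show False using nx by blast
qed

lemma exists_uhom:
  fixes c :: "'b::boolean_algebra"
  assumes "c \<noteq> bot" shows "\<exists>P. uhom P \<and> P c"
proof -
  define A where "A = {F. filt F \<and> c \<in> F}"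
  have "\<forall>C\<in>chains A. \<exists>U\<in>A. \<forall>X\<in>C. X \<subseteq> U"
    using chain_ub[OF assms] unfolding A_def by blast
  from Zorn_Lemma2[OF this] obtain M where MA: "M \<in> A" and max: "\<And>X. X \<in> A \<Longrightarrow> M \<subseteq> X \<Longrightarrow> X = M" by blast
  have fM: "filt M" and cM: "c \<in> M" using MA unfolding A_def by auto
  have prime: "x \<in> M \<or> - x \<in> M" for x
    by (rule filt_prime[OF fM]) (use max cM in \<open>auto simp: A_def\<close>)
  have "uhom (\<lambda>y. y \<in> M)" unfolding uhom_def
  proof (intro conjI allI)
    show "top \<in> M" "bot \<notin> M" using fM filt_top filt_bot by auto
    show "(inf x y \<in> M) = (x \<in> M \<and> y \<in> M)" for x y
    proof
      assume "inf x y \<in> M" then show "x \<in> M \<and> y \<in> M"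
        using filt_up[OF fM, of "inf x y" x] filt_up[OF fM, of "inf x y" y] by simp
    next
      assume "x \<in> M \<and> y \<in> M" then show "inf x y \<in> M" using filt_inf[OF fM, of x y] by simp
    qed
    show "(- x \<in> M) = (x \<notin> M)" for x
    proof
      assume "- x \<in> M" show "x \<notin> M"
      proof
        assume "x \<in> M" then have "inf x (- x) \<in> M" using \<open>- x \<in> M\<close> filt_inf[OF fM] by blast
        then show False using filt_bot[OF fM] by simp
      qed
    next
      assume "x \<notin> M" then show "- x \<in> M" using prime by blast
    qed
  qed
  then show ?thesis using cM by blast
qed

lemma uhom_ext:
  fixes a b :: "'b::boolean_algebra"
  assumes "\<And>P. uhom P \<Longrightarrow> P a = P b" shows "a = b"
proof (rule ccontr)
  assume "a \<noteq> b"
  then have "\<not> a \<le> b \<or> \<not> b \<le> a" by auto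
  then show False
  proof
    assume "\<not> a \<le> b"
    then have "inf a (- b) \<noteq> bot" by (simp add: inf_shunt)
    then obtain P where "uhom P" "P (inf a (- b))" using exists_uhom by blast
    then show False using assms[of P] by (simp add: uhom_inf uhom_neg)
  next
    assume "\<not> b \<le> a"
    then have "inf b (- a) \<noteq> bot" by (simp add: inf_shunt)
    then obtain P where "uhom P" "P (inf b (- a))" using exists_uhom by blast
    then show False using assms[of P] by (simp add: uhom_inf uhom_neg)
  qed
qed




lemma bool1:
  fixes x D E A :: "'b::boolean_algebra"
  assumes "x \<le> sup D E" "inf A D = bot" shows "inf x A \<le> E"
proof -
  have "inf x A \<le> inf (sup D E) A" using assms(1) by (rule inf_mono) simp
  also have "\<dots> = sup (inf A D) (inf A E)" by (simp add: inf_sup_distrib1 inf_commute)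
  also have "\<dots> = inf A E" using assms(2) by simp
  also have "\<dots> \<le> E" by simp
  finally show ?thesis .
qed

lemma partition_le:
  fixes c t :: "'b::boolean_algebra"
  assumes "is_partition n a" "\<And>l. l \<le> n \<Longrightarrow> inf c (a l) \<le> t"
  shows "c \<le> t"
proof -
  have "Sup_fin (a ` {..n}) \<le> sup (- c) t"
  proof (rule Sup_fin.boundedI)
    show "finite (a ` {..n})" by simp
    show "a ` {..n} \<noteq> {}" by simp
    fix b assume "b \<in> a ` {..n}"
    then obtain l where l: "l \<le> n" "b = a l" by auto
    have "inf b c \<le> t" using assms(2)[OF l(1)] l(2) by (simp add: inf_commute)
    then show "b \<le> sup (- c) t" by (simp add: shunt1)
  qed
  then have "top \<le> sup (- c) t" using assms(1) unfolding is_partition_def by simp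
  then have "inf top c \<le> t" by (simp only: shunt1)
  then show ?thesis by simp
qed




definition pairs :: "('a \<Rightarrow> 'a \<Rightarrow> 'b) \<Rightarrow> nat \<Rightarrow> (nat \<Rightarrow> 'a) \<Rightarrow> 'b set" where
  "pairs d k u = {d (u i) (u j) | i j. i < j \<and> j \<le> k}"

definition meet :: "('a \<Rightarrow> 'a \<Rightarrow> 'b::boolean_algebra) \<Rightarrow> nat \<Rightarrow> (nat \<Rightarrow> 'a) \<Rightarrow> 'b" where
  "meet d k u = Inf_fin (pairs d k u)"

lemma alpha_eq: "k \<noteq> 0 \<Longrightarrow> alpha Y d k = (THE s. is_lub {meet d k u | u. \<forall>i\<le>k. u i \<in> Y} s)"
  by (simp add: alpha_def meet_def pairs_def)

lemma pairs_finite: "finite (pairs d k u)"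
proof (rule finite_subset)
  show "pairs d k u \<subseteq> (\<lambda>(i,j). d (u i) (u j)) ` ({..k} \<times> {..k})"
    unfolding pairs_def by force
qed simp

lemma pairs_ne: "1 \<le> k \<Longrightarrow> pairs d k u \<noteq> {}"
  unfolding pairs_def by (rule notI) (drule equalityD1, auto dest!: subsetD[where c = "d (u 0) (u 1)"])

lemma meet_le: "i < j \<Longrightarrow> j \<le> k \<Longrightarrow> meet d k u \<le> d (u i) (u j)"
  unfolding meet_def by (rule Inf_fin.coboundedI[OF pairs_finite]) (auto simp: pairs_def)

lemma le_meet: "1 \<le> k \<Longrightarrow> (\<And>i j. i < j \<Longrightarrow> j \<le> k \<Longrightarrow> c \<le> d (u i) (u j)) \<Longrightarrow> c \<le> meet d k u"
  unfolding meet_def by (rule Inf_fin.boundedI[OF pairs_finite pairs_ne]) (auto simp: pairs_def)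

lemma uhom_meet: "uhom P \<Longrightarrow> 1 \<le> k \<Longrightarrow> P (meet d k u) = (\<forall>i j. i < j \<and> j \<le> k \<longrightarrow> P (d (u i) (u j)))"
  unfolding meet_def by (subst uhom_Inf_fin[OF pairs_finite pairs_ne]) (auto simp: pairs_def)

lemma meet_cong: "(\<And>i. i \<le> k \<Longrightarrow> u i = v i) \<Longrightarrow> meet d k u = meet d k v"
proof -
  assume h: "\<And>i. i \<le> k \<Longrightarrow> u i = v i"
  have "pairs d k u = pairs d k v" unfolding pairs_def
  proof (intro equalityI subsetI)
    fix x assume "x \<in> {d (u i) (u j) |i j. i < j \<and> j \<le> k}"
    then obtain i j where "x = d (u i) (u j)" "i < j" "j \<le> k" by blast
    then show "x \<in> {d (v i) (v j) |i j. i < j \<and> j \<le> k}" using h[of i] h[of j]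
      by (intro CollectI exI[of _ i] exI[of _ j]) simp
  next
    fix x assume "x \<in> {d (v i) (v j) |i j. i < j \<and> j \<le> k}"
    then obtain i j where "x = d (v i) (v j)" "i < j" "j \<le> k" by blast
    then show "x \<in> {d (u i) (u j) |i j. i < j \<and> j \<le> k}" using h[of i] h[of j]
      by (intro CollectI exI[of _ i] exI[of _ j]) simp
  qed
  then show ?thesis by (simp add: meet_def)
qed

lemma bm_sym: "bool_metric X d \<Longrightarrow> x \<in> X \<Longrightarrow> y \<in> X \<Longrightarrow> d x y = d y x"
  unfolding bool_metric_def by blast
lemma bm_zero: "bool_metric X d \<Longrightarrow> x \<in> X \<Longrightarrow> y \<in> X \<Longrightarrow> d x y = bot \<longleftrightarrow> x = y"
  unfolding bool_metric_def by blast
lemma bm_tri: "bool_metric X d \<Longrightarrow> x \<in> X \<Longrightarrow> y \<in> X \<Longrightarrow> z \<in> X \<Longrightarrow> d x z \<le> sup (d x y) (d y z)"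
  unfolding bool_metric_def by blast

lemma repl:
  assumes bm: "bool_metric X d" and k: "1 \<le> k" and m: "m \<le> k" and u: "\<And>i. i \<le> k \<Longrightarrow> u i \<in> X"
    and s: "s \<in> X" and A: "inf A (d (u m) s) = bot"
  shows "inf (meet d k u) A \<le> meet d k (u(m := s))"
proof (rule le_meet[OF k])
  fix i j assume ij: "i < j" "j \<le> k"
  have ui: "u i \<in> X" "u j \<in> X" "u m \<in> X" using ij m u by auto
  show "inf (meet d k u) A \<le> d ((u(m := s)) i) ((u(m := s)) j)"
  proof (cases "i = m")
    case True
    then have jm: "j \<noteq> m" using ij by auto
    have "meet d k u \<le> d (u m) (u j)" using meet_le[OF ij] True by simp
    also have "\<dots> \<le> sup (d (u m) s) (d s (u j))" by (rule bm_tri[OF bm ui(3) s ui(2)])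
    finally have "inf (meet d k u) A \<le> d s (u j)" using A by (rule bool1)
    then show ?thesis using True jm by simp
  next
    case False
    note im = False
    show ?thesis
    proof (cases "j = m")
      case True
      have "meet d k u \<le> d (u i) (u m)" using meet_le[OF ij] True by simp
      also have "\<dots> \<le> sup (d s (u m)) (d (u i) s)"
        using bm_tri[OF bm ui(1) s ui(3)] by (simp add: sup_commute)
      finally have "inf (meet d k u) A \<le> d (u i) s" using A bm_sym[OF bm ui(3) s] by (intro bool1) simp_all
      then show ?thesis using True im by simp
    next
      case False
      have "inf (meet d k u) A \<le> meet d k u" by simp
      also have "\<dots> \<le> d (u i) (u j)" by (rule meet_le[OF ij])
      finally show ?thesis using False im by simp
    qed
  qed
qed

lemma lub_gen:
  assumes bm: "bool_metric X d" and YX: "Y \<subseteq> X" and fS: "finite S" and SY: "S \<subseteq> Y" and Sne: "S \<noteq> {}"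
    and gen: "\<And>y. y \<in> Y \<Longrightarrow> \<exists>n xs a. (\<forall>i\<le>n. xs i \<in> S) \<and> convex_comb d y n xs a"
    and k: "1 \<le> k"
  defines "MS \<equiv> (\<lambda>xs. meet d k (nth xs)) ` {xs. set xs \<subseteq> S \<and> length xs = Suc k}"
  shows "alpha Y d k = Sup_fin MS"
    and "\<And>u. (\<And>i. i \<le> k \<Longrightarrow> u i \<in> Y) \<Longrightarrow> meet d k u \<le> Sup_fin MS"
    and "\<And>c. c \<in> MS \<Longrightarrow> \<exists>u. (\<forall>i\<le>k. u i \<in> Y) \<and> c = meet d k u"
    and "finite MS" "MS \<noteq> {}"
proof -
  show fMS: "finite MS" unfolding MS_def using finite_lists_length_eq[OF fS] by simp
  obtain s0 where s0: "s0 \<in> S" using Sne by blast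
  have "set (replicate (Suc k) s0) = {s0}" by (simp only: set_replicate_Suc)
  then have "replicate (Suc k) s0 \<in> {xs. set xs \<subseteq> S \<and> length xs = Suc k}" using s0 by (simp del: replicate_Suc)
  then show neMS: "MS \<noteq> {}" unfolding MS_def by blast
  show MSu: "\<exists>u. (\<forall>i\<le>k. u i \<in> Y) \<and> c = meet d k u" if "c \<in> MS" for c
  proof -
    from that obtain xs where xs: "set xs \<subseteq> S" "length xs = Suc k" "c = meet d k (nth xs)"
      unfolding MS_def by blast
    have "\<forall>i\<le>k. xs ! i \<in> Y" using xs SY by (auto simp: subset_iff)
    then show ?thesis using xs by blast
  qed
  let ?T = "Sup_fin MS"
  have key: "\<forall>u. (\<forall>i\<le>k. u i \<in> Y) \<and> (\<forall>i. i + r \<le> k \<longrightarrow> u i \<in> S) \<longrightarrow> meet d k u \<le> ?T" for r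
  proof (induction r)
    case 0
    show ?case
    proof (intro allI impI)
      fix u assume "(\<forall>i\<le>k. u i \<in> Y) \<and> (\<forall>i. i + 0 \<le> k \<longrightarrow> u i \<in> S)"
      then have uS: "\<forall>i\<le>k. u i \<in> S" by simp
      let ?xs = "map u [0..<Suc k]"
      have "?xs \<in> {xs. set xs \<subseteq> S \<and> length xs = Suc k}" using uS by auto
      moreover have "meet d k (nth ?xs) = meet d k u"
        by (rule meet_cong) (simp del: upt_Suc add: nth_map_upt)
      ultimately have "meet d k u \<in> MS" unfolding MS_def by (metis (no_types, lifting) image_eqI)
      then show "meet d k u \<le> ?T" by (rule Sup_fin.coboundedI[OF fMS])
    qed
  next
    case (Suc r)
    show ?case
    proof (intro allI impI)
      fix u assume hu: "(\<forall>i\<le>k. u i \<in> Y) \<and> (\<forall>i. i + Suc r \<le> k \<longrightarrow> u i \<in> S)"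
      show "meet d k u \<le> ?T"
      proof (cases "r \<le> k")
        case False
        then show ?thesis using Suc.IH hu by auto
      next
        case True
        define m where "m = k - r"
        have mk: "m \<le> k" using True m_def by simp
        have umY: "u m \<in> Y" using hu mk by blast
        obtain n xs a where xs: "\<forall>i\<le>n. xs i \<in> S" and cc: "convex_comb d (u m) n xs a"
          using gen[OF umY] by blast
        have part: "is_partition n a" using cc unfolding convex_comb_def by simp
        show ?thesis
        proof (rule partition_le[OF part])
          fix l assume l: "l \<le> n"
          have A: "inf (a l) (d (u m) (xs l)) = bot" using cc l unfolding convex_comb_def by simp
          have uX: "\<And>i. i \<le> k \<Longrightarrow> u i \<in> X" using hu YX by blast
          have sX: "xs l \<in> X" using xs l SY YX by blast
          have "inf (meet d k u) (a l) \<le> meet d k (u(m := xs l))"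
            by (rule repl[where u=u and m=m and s="xs l" and A="a l", OF bm k mk uX sX A])
          also have "\<dots> \<le> ?T"
          proof -
            have "\<forall>i\<le>k. (u(m := xs l)) i \<in> Y" using hu xs l SY by auto
            moreover have "\<forall>i. i + r \<le> k \<longrightarrow> (u(m := xs l)) i \<in> S"
            proof (intro allI impI)
              fix i assume "i + r \<le> k"
              show "(u(m := xs l)) i \<in> S"
              proof (cases "i = m")
                case True then show ?thesis using xs l by simp
              next
                case False
                then have "i + Suc r \<le> k" using \<open>i + r \<le> k\<close> m_def by auto
                then show ?thesis using hu False by simp
              qed
            qed
            ultimately show ?thesis using Suc.IH by blast
          qed
          finally show "inf (meet d k u) (a l) \<le> ?T" .
        qed
      qed
    qed
  qed
  show ub: "meet d k u \<le> ?T" if "\<And>i. i \<le> k \<Longrightarrow> u i \<in> Y" for u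
    using key[of "Suc k"] that by auto
  have lub: "is_lub {meet d k u | u. \<forall>i\<le>k. u i \<in> Y} ?T"
    unfolding is_lub_def
  proof (intro conjI allI impI ballI)
    fix c assume "c \<in> {meet d k u | u. \<forall>i\<le>k. u i \<in> Y}"
    then show "c \<le> ?T" using ub by blast
  next
    fix t assume ht: "\<forall>c\<in>{meet d k u | u. \<forall>i\<le>k. u i \<in> Y}. c \<le> t"
    show "?T \<le> t"
    proof (rule Sup_fin.boundedI[OF fMS neMS])
      fix c assume "c \<in> MS"
      then obtain u where "\<forall>i\<le>k. u i \<in> Y" "c = meet d k u" using MSu by blast
      then show "c \<le> t" using ht by blast
    qed
  qed
  have "(THE s. is_lub {meet d k u | u. \<forall>i\<le>k. u i \<in> Y} s) = ?T"
  proof (rule the_equality[where P="is_lub {meet d k u | u. \<forall>i\<le>k. u i \<in> Y}", OF lub])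
    fix s assume "is_lub {meet d k u | u. \<forall>i\<le>k. u i \<in> Y} s"
    then show "s = ?T" using lub unfolding is_lub_def by (meson order.antisym)
  qed
  then show "alpha Y d k = ?T" using alpha_eq[of k Y d] k by simp
qed




definition ge :: "('b::boolean_algebra \<Rightarrow> bool) \<Rightarrow> ('a \<Rightarrow> 'a \<Rightarrow> 'b) \<Rightarrow> 'a set \<Rightarrow> nat \<Rightarrow> bool" where
  "ge P d Y k \<longleftrightarrow> (\<exists>u. (\<forall>i\<le>k. u i \<in> Y) \<and> (\<forall>i j. i < j \<and> j \<le> k \<longrightarrow> P (d (u i) (u j))))"

lemma uhom_alpha:
  assumes P: "uhom P" and bm: "bool_metric X d" and YX: "Y \<subseteq> X" and fS: "finite S" and SY: "S \<subseteq> Y" and Sne: "S \<noteq> {}"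
    and gen: "\<And>y. y \<in> Y \<Longrightarrow> \<exists>n xs a. (\<forall>i\<le>n. xs i \<in> S) \<and> convex_comb d y n xs a"
  shows "P (alpha Y d k) = ge P d Y k"
proof (cases "k = 0")
  case True
  obtain s where "s \<in> Y" using Sne SY by blast
  then have "ge P d Y k" unfolding ge_def using True by (intro exI[of _ "\<lambda>_. s"]) auto
  then show ?thesis using True uhom_top[OF P] by (simp add: alpha_def)
next
  case False
  then have k: "1 \<le> k" by simp
  define MS where "MS = (\<lambda>xs. meet d k (nth xs)) ` {xs. set xs \<subseteq> S \<and> length xs = Suc k}"
  note L = lub_gen[OF bm YX fS SY Sne gen k, folded MS_def]
  have "P (alpha Y d k) = (\<exists>c\<in>MS. P c)" using L(1) uhom_Sup_fin[OF L(4) L(5) P] by simp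
  also have "\<dots> = (\<exists>u. (\<forall>i\<le>k. u i \<in> Y) \<and> P (meet d k u))"
  proof
    assume "\<exists>c\<in>MS. P c"
    then obtain c where "c \<in> MS" "P c" by blast
    then show "\<exists>u. (\<forall>i\<le>k. u i \<in> Y) \<and> P (meet d k u)" using L(3) by blast
  next
    assume "\<exists>u. (\<forall>i\<le>k. u i \<in> Y) \<and> P (meet d k u)"
    then obtain u where u: "\<forall>i\<le>k. u i \<in> Y" "P (meet d k u)" by blast
    have "meet d k u \<le> Sup_fin MS" using L(2) u(1) by blast
    then have "P (Sup_fin MS)" using uhom_mono[OF P _ u(2)] by blast
    then show "\<exists>c\<in>MS. P c" using uhom_Sup_fin[OF L(4) L(5) P] by simp
  qed
  also have "\<dots> = ge P d Y k" unfolding ge_def using uhom_meet[OF P k, of d] by simp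
  finally show ?thesis .
qed

definition gs :: "'c set \<Rightarrow> nat \<Rightarrow> bool" where
  "gs C k \<longleftrightarrow> (\<exists>F. F \<subseteq> C \<and> finite F \<and> card F = Suc k)"

lemma gs_card: "F \<subseteq> C \<Longrightarrow> finite F \<Longrightarrow> Suc k \<le> card F \<Longrightarrow> gs C k"
proof -
  assume h: "F \<subseteq> C" "finite F" "Suc k \<le> card F"
  obtain T where "T \<subseteq> F" "card T = Suc k" "finite T" using obtain_subset_with_card_n[OF h(3)] by blast
  then show "gs C k" unfolding gs_def using h(1) by blast
qed

lemma gs_union:
  assumes AB: "A \<inter> B \<subseteq> {z}" and zA: "z \<in> A" and zB: "z \<in> B"
  shows "gs (A \<union> B) n = (\<exists>i\<le>n. gs A i \<and> gs B (n - i))"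
proof
  assume "gs (A \<union> B) n"
  then obtain F where F: "F \<subseteq> A \<union> B" "finite F" "card F = Suc n" unfolding gs_def by blast
  define FA where "FA = insert z (F \<inter> A)"
  define FB where "FB = insert z (F \<inter> B)"
  have fin: "finite FA" "finite FB" using F(2) unfolding FA_def FB_def by auto
  have un: "FA \<union> FB = insert z F" using F(1) unfolding FA_def FB_def by auto
  have int: "FA \<inter> FB = {z}" using AB unfolding FA_def FB_def by auto
  have "card FA + card FB = card (FA \<union> FB) + card (FA \<inter> FB)"
    using card_Un_Int[OF fin] .
  also have "\<dots> \<ge> Suc n + 1" using un int F(2,3) card_mono[OF _ subset_insertI[of F z]] by simp
  finally have sum: "card FA + card FB \<ge> Suc (Suc n)" by simp
  have cA: "card FA \<ge> 1" using fin(1) unfolding FA_def by (simp add: card_gt_0_iff Suc_le_eq)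
  have FAs: "FA \<subseteq> A" "FB \<subseteq> B" using F(1) zA zB unfolding FA_def FB_def by auto
  show "\<exists>i\<le>n. gs A i \<and> gs B (n - i)"
  proof (cases "card FA \<ge> Suc n")
    case True
    have "gs A n" using gs_card[OF FAs(1) fin(1) True] .
    moreover have "gs B 0" using gs_card[of "{z}" B 0] zB by simp
    ultimately show ?thesis by (intro exI[of _ n]) simp
  next
    case False
    define i where "i = card FA - 1"
    have "gs A i" using gs_card[OF FAs(1) fin(1)] cA unfolding i_def by simp
    moreover have "gs B (n - i)" using gs_card[OF FAs(2) fin(2)] cA sum False unfolding i_def by simp
    moreover have "i \<le> n" using False unfolding i_def by simp
    ultimately show ?thesis by blast
  qed
next
  assume "\<exists>i\<le>n. gs A i \<and> gs B (n - i)"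
  then obtain i FA FB where i: "i \<le> n" and FA: "FA \<subseteq> A" "finite FA" "card FA = Suc i"
    and FB: "FB \<subseteq> B" "finite FB" "card FB = Suc (n - i)" unfolding gs_def by blast
  have "FA \<inter> FB \<subseteq> {z}" using FA FB AB by blast
  then have ci: "card (FA \<inter> FB) \<le> 1" using card_mono[of "{z}" "FA \<inter> FB"] by simp
  have "card (FA \<union> FB) + card (FA \<inter> FB) = card FA + card FB" using card_Un_Int[OF FA(2) FB(2)] by simp
  then have "card (FA \<union> FB) \<ge> Suc n" using ci FA(3) FB(3) i by simp
  then show "gs (A \<union> B) n" using gs_card[of "FA \<union> FB" "A \<union> B" n] FA FB by auto
qed

lemma ge_gs:
  fixes R :: "'a \<Rightarrow> 'a \<Rightarrow> bool"
  assumes refl: "\<And>x. x \<in> X \<Longrightarrow> R x x" and sym: "\<And>x y. x \<in> X \<Longrightarrow> y \<in> X \<Longrightarrow> R x y \<Longrightarrow> R y x"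
    and trans: "\<And>x y z. x \<in> X \<Longrightarrow> y \<in> X \<Longrightarrow> z \<in> X \<Longrightarrow> R x y \<Longrightarrow> R y z \<Longrightarrow> R x z"
    and YX: "Y \<subseteq> X"
  defines "q \<equiv> \<lambda>x. {y \<in> X. R x y}"
  shows "(\<exists>u. (\<forall>i\<le>k. u i \<in> Y) \<and> (\<forall>i j. i < j \<and> j \<le> k \<longrightarrow> \<not> R (u i) (u j))) = gs (q ` Y) k"
proof -
  have qeq: "q x = q y \<longleftrightarrow> R x y" if "x \<in> X" "y \<in> X" for x y
  proof
    assume "q x = q y"
    then have "y \<in> q x" using refl[OF that(2)] that unfolding q_def by blast
    then show "R x y" unfolding q_def by blast
  next
    assume "R x y"
    then show "q x = q y" unfolding q_def using sym trans that by blast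
  qed
  show ?thesis
  proof
    assume "\<exists>u. (\<forall>i\<le>k. u i \<in> Y) \<and> (\<forall>i j. i < j \<and> j \<le> k \<longrightarrow> \<not> R (u i) (u j))"
    then obtain u where u: "\<forall>i\<le>k. u i \<in> Y" "\<forall>i j. i < j \<and> j \<le> k \<longrightarrow> \<not> R (u i) (u j)" by blast
    have inj: "inj_on (q \<circ> u) {..k}"
    proof (rule inj_onI)
      fix i j assume ij: "i \<in> {..k}" "j \<in> {..k}" "(q \<circ> u) i = (q \<circ> u) j"
      have X: "u i \<in> X" "u j \<in> X" using ij u(1) YX by auto
      have R: "R (u i) (u j)" using ij(3) qeq[OF X] by simp
      show "i = j"
      proof (rule ccontr)
        assume "i \<noteq> j"
        then have "i < j \<or> j < i" by arith
        then show False
        proof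
          assume "i < j" then show False using u(2) ij R by auto
        next
          assume "j < i" then show False using u(2) ij sym[OF X R] by auto
        qed
      qed
    qed
    have "(q \<circ> u) ` {..k} \<subseteq> q ` Y" using u(1) by auto
    moreover have "card ((q \<circ> u) ` {..k}) = Suc k" using card_image[OF inj] by simp
    ultimately show "gs (q ` Y) k" unfolding gs_def by blast
  next
    assume "gs (q ` Y) k"
    then obtain F where F: "F \<subseteq> q ` Y" "finite F" "card F = Suc k" unfolding gs_def by blast
    obtain h where h: "bij_betw h {0..<Suc k} F" using ex_bij_betw_nat_finite[OF F(2)] F(3) by auto
    have hY: "\<exists>y. y \<in> Y \<and> q y = h i" if "i \<le> k" for i
    proof -
      have "h i \<in> F" using h that bij_betwE by fastforce
      then show ?thesis using F(1) by blast
    qed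
    define u where "u i = (SOME y. y \<in> Y \<and> q y = h i)" for i
    have u: "u i \<in> Y \<and> q (u i) = h i" if "i \<le> k" for i
      unfolding u_def using someI_ex[OF hY[OF that]] .
    show "\<exists>u. (\<forall>i\<le>k. u i \<in> Y) \<and> (\<forall>i j. i < j \<and> j \<le> k \<longrightarrow> \<not> R (u i) (u j))"
    proof (intro exI conjI allI impI)
      show "u i \<in> Y" if "i \<le> k" for i using u[OF that] by simp
      fix i j assume ij: "i < j \<and> j \<le> k"
      show "\<not> R (u i) (u j)"
      proof
        assume "R (u i) (u j)"
        moreover have "u i \<in> X" "u j \<in> X" using u ij YX by auto
        ultimately have "q (u i) = q (u j)" using qeq by blast
        then have "h i = h j" using u[of i] u[of j] ij by simp
        moreover have "inj_on h {0..<Suc k}" using h bij_betw_def by blast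
        ultimately show False using ij inj_on_contraD by fastforce
      qed
    qed
  qed
qed




locale cfg2 =
  fixes X U :: "'a set" and d :: "'a \<Rightarrow> 'a \<Rightarrow> 'b::boolean_algebra" and p :: 'a and SU SX :: "'a set"
  assumes bmX: "bool_metric X d" and cvX: "convex_space X d" and pX: "p \<in> X" and UX: "U \<subseteq> X" and pU: "p \<in> U"
    and fSU: "finite SU" and SUU: "SU \<subseteq> U"
    and genU: "\<And>y. y \<in> U \<Longrightarrow> \<exists>n xs a. (\<forall>i\<le>n. xs i \<in> SU) \<and> convex_comb d y n xs a"
    and fSX: "finite SX" and SXX: "SX \<subseteq> X"
    and genX: "\<And>y. y \<in> X \<Longrightarrow> \<exists>n xs a. (\<forall>i\<le>n. xs i \<in> SX) \<and> convex_comb d y n xs a"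
begin

abbreviation "W \<equiv> orth_compl X d p U"

definition e :: "'a \<Rightarrow> 'b" where "e x = Inf_fin (d x ` insert p SU)"

lemma WX: "W \<subseteq> X" unfolding orth_compl_def by auto

lemma orthW: "w \<in> W \<Longrightarrow> v \<in> U \<Longrightarrow> d v w = sup (d v p) (d w p)"
  unfolding orth_compl_def orth_def by auto

lemma pW: "p \<in> W"
proof -
  have "d v p = sup (d v p) (d p p)" if "v \<in> U" for v
    using bm_zero[OF bmX pX pX] by simp
  then show ?thesis unfolding orth_compl_def orth_def using pX by auto
qed

lemma mix:
  assumes "x \<in> X" "y \<in> X"
  shows "\<exists>z\<in>X. inf b (d z x) = bot \<and> inf (- b) (d z y) = bot"
proof -
  define xs where "xs = (\<lambda>i::nat. if i = 0 then x else y)"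
  define a where "a = (\<lambda>i::nat. if i = 0 then b else - b)"
  have ix: "{..Suc 0} = {0, Suc 0}" by auto
  have part: "is_partition 1 a" unfolding is_partition_def
  proof (intro conjI allI impI)
    fix i j :: nat assume "i \<le> 1" "j \<le> 1" "i \<noteq> j"
    then have "(i = 0 \<and> j = 1) \<or> (i = 1 \<and> j = 0)" by auto
    then show "inf (a i) (a j) = bot" unfolding a_def by auto
  next
    have "a ` {..1} = {b, - b}" unfolding a_def using ix by auto
    then show "Sup_fin (a ` {..1}) = top" by simp
  qed
  have "\<forall>i\<le>1. xs i \<in> X" using assms unfolding xs_def by auto
  then obtain z where z: "z \<in> X" "convex_comb d z 1 xs a" using cvX part unfolding convex_space_def by blast
  then have "inf (a 0) (d z (xs 0)) = bot" "inf (a 1) (d z (xs 1)) = bot" unfolding convex_comb_def by auto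
  then show ?thesis using z(1) unfolding a_def xs_def by auto
qed

lemma ptri: "uhom P \<Longrightarrow> x \<in> X \<Longrightarrow> y \<in> X \<Longrightarrow> z \<in> X \<Longrightarrow> P (d x z) \<Longrightarrow> P (d x y) \<or> P (d y z)"
  using uhom_mono[of P "d x z" "sup (d x y) (d y z)"] bm_tri[OF bmX] uhom_sup by blast

lemma psym: "x \<in> X \<Longrightarrow> y \<in> X \<Longrightarrow> P (d x y) = P (d y x)"
  using bm_sym[OF bmX] by metis

lemma prefl: "uhom P \<Longrightarrow> x \<in> X \<Longrightarrow> \<not> P (d x x)"
  using bm_zero[OF bmX] uhom_bot by metis

lemma pbot: "uhom P \<Longrightarrow> inf a b = bot \<Longrightarrow> P a \<Longrightarrow> \<not> P b"
  using uhom_inf uhom_bot by metis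

lemma e_fin: "finite (d x ` insert p SU)" "d x ` insert p SU \<noteq> {}" using fSU by auto

lemma e_le_p: "e x \<le> d x p"
  unfolding e_def by (rule Inf_fin.coboundedI[OF e_fin(1)]) simp

lemma e_le:
  assumes x: "x \<in> X" and v: "v \<in> U" shows "e x \<le> d x v"
proof -
  obtain n xs a where xs: "\<forall>i\<le>n. xs i \<in> SU" and cc: "convex_comb d v n xs a" using genU[OF v] by blast
  show ?thesis
  proof (rule partition_le)
    show "is_partition n a" using cc unfolding convex_comb_def by simp
    fix l assume l: "l \<le> n"
    have sU: "xs l \<in> X" using xs l SUU UX by blast
    have vX: "v \<in> X" using v UX by blast
    have "e x \<le> d x (xs l)" unfolding e_def by (rule Inf_fin.coboundedI[OF e_fin(1)]) (use xs l in simp)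
    also have "\<dots> \<le> sup (d x v) (d v (xs l))" by (rule bm_tri[OF bmX x vX sU])
    finally have c1: "e x \<le> sup (d v (xs l)) (d x v)" by (simp add: sup_commute)
    have c2: "inf (a l) (d v (xs l)) = bot" using cc l by (simp add: convex_comb_def)
    show "inf (e x) (a l) \<le> d x v" using bool1[OF c1 c2] .
  qed
qed

lemma proj_ex:
  assumes x: "x \<in> X"
  shows "\<exists>z\<in>W. inf (e x) (d z x) = bot \<and> inf (- e x) (d z p) = bot"
proof -
  obtain z where z: "z \<in> X" "inf (e x) (d z x) = bot" "inf (- e x) (d z p) = bot"
    using mix[OF x pX] by blast
  have "z \<in> W" unfolding orth_compl_def orth_def
  proof (intro CollectI conjI ballI)
    show "z \<in> X" by fact
    fix v assume v: "v \<in> U"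
    have vX: "v \<in> X" using v UX by blast
    show "d v z = sup (d v p) (d z p)"
    proof (rule uhom_ext)
      fix P :: "'b \<Rightarrow> bool" assume P: "uhom P"
      show "P (d v z) = P (sup (d v p) (d z p))"
      proof (cases "P (e x)")
        case True
        have nzx: "\<not> P (d z x)" using pbot[OF P z(2) True] .
        have nxz: "\<not> P (d x z)" using nzx psym[OF z(1) x, of P] by simp
        have "P (d x v)" using uhom_mono[OF P e_le[OF x v] True] .
        then have "P (d x z) \<or> P (d z v)" using ptri[OF P x z(1) vX] by simp
        then have "P (d z v)" using nxz by simp
        then have 1: "P (d v z)" using psym[OF z(1) vX, of P] by simp
        have "P (d x p)" using uhom_mono[OF P e_le_p True] .
        then have "P (d x z) \<or> P (d z p)" using ptri[OF P x z(1) pX] by simp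
        then have 2: "P (d z p)" using nxz by simp
        show ?thesis using 1 2 uhom_sup[OF P] by simp
      next
        case False
        then have "P (- e x)" using uhom_neg[OF P] by simp
        then have nzp: "\<not> P (d z p)" using pbot[OF P z(3)] by simp
        have npz: "\<not> P (d p z)" using nzp psym[OF z(1) pX, of P] by simp
        have a: "P (d v z) \<Longrightarrow> P (d v p)" using ptri[OF P vX pX z(1)] npz by simp
        have b: "P (d v p) \<Longrightarrow> P (d v z)" using ptri[OF P vX z(1) pX] nzp by simp
        have "P (d v z) = P (d v p)" using a b by blast
        then show ?thesis using nzp uhom_sup[OF P] by simp
      qed
    qed
  qed
  then show ?thesis using z by blast
qed

definition proj :: "'a \<Rightarrow> 'a" where
  "proj x = (SOME z. z \<in> W \<and> inf (e x) (d z x) = bot \<and> inf (- e x) (d z p) = bot)"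

lemma proj: "x \<in> X \<Longrightarrow> proj x \<in> W \<and> inf (e x) (d (proj x) x) = bot \<and> inf (- e x) (d (proj x) p) = bot"
  unfolding proj_def using someI_ex[OF proj_ex[unfolded Bex_def]] by blast

lemma genW: "w \<in> W \<Longrightarrow> \<exists>n xs a. (\<forall>i\<le>n. xs i \<in> proj ` SX) \<and> convex_comb d w n xs a"
proof -
  assume w: "w \<in> W"
  have wX: "w \<in> X" using w WX by blast
  obtain n xs a where xs: "\<forall>i\<le>n. xs i \<in> SX" and cc: "convex_comb d w n xs a" using genX[OF wX] by blast
  have "convex_comb d w n (proj \<circ> xs) a" unfolding convex_comb_def
  proof (intro conjI allI impI)
    show "is_partition n a" using cc unfolding convex_comb_def by simp
    fix l assume l: "l \<le> n"
    define s where "s = xs l"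
    have sX: "s \<in> X" using xs l SXX s_def by blast
    note pr = proj[OF sX]
    have x'X: "proj s \<in> X" using pr WX by blast
    have A: "inf (a l) (d w s) = bot" using cc l unfolding convex_comb_def s_def by simp
    show "inf (a l) (d w ((proj \<circ> xs) l)) = bot"
    proof (rule uhom_ext)
      fix P :: "'b \<Rightarrow> bool" assume P: "uhom P"
      have "\<not> (P (a l) \<and> P (d w (proj s)))"
      proof
        assume h: "P (a l) \<and> P (d w (proj s))"
        have nws: "\<not> P (d w s)" using pbot[OF P A] h by blast
        have hw: "P (d w (proj s))" using h by simp
        show False
        proof (cases "P (e s)")
          case True
          have "inf (e s) (d (proj s) s) = bot" using pr by simp
          then have n1: "\<not> P (d (proj s) s)" using pbot[OF P _ True] by blast
          have n2: "\<not> P (d s (proj s))" using n1 psym[OF sX x'X, of P] by simp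
          show False using ptri[OF P wX sX x'X hw] nws n2 by simp
        next
          case False
          then have "P (- e s)" using uhom_neg[OF P] by simp
          moreover have "inf (- e s) (d (proj s) p) = bot" using pr by simp
          ultimately have nxp: "\<not> P (d (proj s) p)" using pbot[OF P] by blast
          have npx: "\<not> P (d p (proj s))" using nxp psym[OF pX x'X, of P] by simp
          have "\<not> P (Inf_fin (d s ` insert p SU))" using False unfolding e_def .
          then obtain t where t: "t \<in> insert p SU" "\<not> P (d s t)"
            using uhom_Inf_fin[OF e_fin P] by blast
          have tU: "t \<in> U" using t(1) pU SUU by blast
          have tX: "t \<in> X" using tU UX by blast
          have "P (d w p) \<or> P (d p (proj s))" using ptri[OF P wX pX x'X hw] .
          then have "P (d w p)" using npx by simp
          then have "P (d t w)" using orthW[OF w tU] uhom_sup[OF P] by simp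
          then have "P (d w t)" using psym[OF tX wX, of P] by simp
          then show False using ptri[OF P wX sX tX] nws t(2) by simp
        qed
      qed
      then show "P (inf (a l) (d w ((proj \<circ> xs) l))) = P bot"
        using uhom_inf[OF P] uhom_bot[OF P] s_def by simp
    qed
  qed
  moreover have "\<forall>i\<le>n. (proj \<circ> xs) i \<in> proj ` SX" using xs by simp
  ultimately show ?thesis by blast
qed

lemma projSX: "proj ` SX \<subseteq> W" using proj SXX by blast

lemma SXne: "SX \<noteq> {}"
proof -
  obtain n :: nat and xs where "\<forall>i\<le>n. xs i \<in> SX" using genX[OF pX] by blast
  then have "xs 0 \<in> SX" by simp
  then show ?thesis by auto
qed

lemma main:
  "alpha X d n = Sup_fin ((\<lambda>i. inf (alpha U d i) (alpha W d (n - i))) ` {..n})"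
proof (rule uhom_ext)
  fix P :: "'b \<Rightarrow> bool" assume P: "uhom P"
  have aX: "P (alpha X d k) = ge P d X k" for k
    by (rule uhom_alpha[OF P bmX order_refl fSX SXX SXne genX])
  have SUne: "insert p SU \<noteq> {}" by simp
  have genU': "\<exists>n xs a. (\<forall>i\<le>n. xs i \<in> insert p SU) \<and> convex_comb d y n xs a" if "y \<in> U" for y
    using genU[OF that] by blast
  have aU: "P (alpha U d k) = ge P d U k" for k
    by (rule uhom_alpha[OF P bmX UX _ _ SUne genU']) (use fSU SUU pU in auto)
  have aW: "P (alpha W d k) = ge P d W k" for k
    by (rule uhom_alpha[OF P bmX WX _ projSX _ genW]) (use fSX SXne in auto)
  define R where "R = (\<lambda>x y. \<not> P (d x y))"
  have Rrefl: "\<And>x. x \<in> X \<Longrightarrow> R x x" unfolding R_def using prefl[OF P] by simp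
  have Rsym: "R y x" if "x \<in> X" "y \<in> X" "R x y" for x y
    using that psym[OF that(1,2), of P] unfolding R_def by simp
  have Rtrans: "R x z" if "x \<in> X" "y \<in> X" "z \<in> X" "R x y" "R y z" for x y z
  proof -
    have "\<not> P (d x z)"
    proof
      assume "P (d x z)"
      then have "P (d x y) \<or> P (d y z)" using ptri[OF P that(1,2,3)] by simp
      then show False using that(4,5) unfolding R_def by simp
    qed
    then show ?thesis unfolding R_def .
  qed
  define q where "q = (\<lambda>x. {y \<in> X. R x y})"
  have geq: "ge P d Y k = gs (q ` Y) k" if "Y \<subseteq> X" for Y k
    using ge_gs[where R=R and X=X and Y=Y and k=k, OF Rrefl Rsym Rtrans that] unfolding ge_def q_def R_def by simp
  have qeq: "q x = q y \<longleftrightarrow> R x y" if "x \<in> X" "y \<in> X" for x y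
  proof
    assume "q x = q y"
    then have "y \<in> q x" using Rrefl[OF that(2)] that unfolding q_def by blast
    then show "R x y" unfolding q_def by blast
  next
    assume "R x y"
    then show "q x = q y" unfolding q_def using Rsym Rtrans that by blast
  qed
  have cover: "q ` X = q ` U \<union> q ` W"
  proof
    show "q ` U \<union> q ` W \<subseteq> q ` X" using UX WX by blast
    show "q ` X \<subseteq> q ` U \<union> q ` W"
    proof
      fix c assume "c \<in> q ` X"
      then obtain x where x: "x \<in> X" "c = q x" by blast
      show "c \<in> q ` U \<union> q ` W"
      proof (cases "P (e x)")
        case True
        have pr: "proj x \<in> W" "inf (e x) (d (proj x) x) = bot" using proj[OF x(1)] by auto
        have "R (proj x) x" unfolding R_def using pbot[OF P pr(2) True] .
        then have "q (proj x) = q x" using qeq pr(1) WX x(1) by blast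
        then show ?thesis using pr(1) x(2) by blast
      next
        case False
        then obtain t where t: "t \<in> insert p SU" "\<not> P (d x t)"
          using uhom_Inf_fin[OF e_fin P] unfolding e_def by blast
        have tU: "t \<in> U" using t(1) pU SUU by blast
        have "q x = q t" using qeq x(1) tU UX t(2) unfolding R_def by blast
        then show ?thesis using tU x(2) by blast
      qed
    qed
  qed
  have inter: "q ` U \<inter> q ` W \<subseteq> {q p}"
  proof
    fix c assume "c \<in> q ` U \<inter> q ` W"
    then obtain u w where uw: "u \<in> U" "w \<in> W" "c = q u" "c = q w" by blast
    have X: "u \<in> X" "w \<in> X" using uw UX WX by blast+
    have "R u w" using qeq[OF X] uw by simp
    then have "\<not> P (d u p)" using orthW[OF uw(2) uw(1)] uhom_sup[OF P] unfolding R_def by simp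
    then have "q u = q p" using qeq[OF X(1) pX] unfolding R_def by simp
    then show "c \<in> {q p}" using uw by simp
  qed
  have LHS: "P (alpha X d n) = gs (q ` U \<union> q ` W) n" using aX geq[OF order_refl] cover by simp
  have fin: "finite ((\<lambda>i. inf (alpha U d i) (alpha W d (n - i))) ` {..n})" by simp
  have ne: "(\<lambda>i. inf (alpha U d i) (alpha W d (n - i))) ` {..n} \<noteq> {}" by simp
  have "P (Sup_fin ((\<lambda>i. inf (alpha U d i) (alpha W d (n - i))) ` {..n}))
      = (\<exists>i\<le>n. P (alpha U d i) \<and> P (alpha W d (n - i)))"
    using uhom_Sup_fin[OF fin ne P] uhom_inf[OF P] by auto
  also have "\<dots> = (\<exists>i\<le>n. gs (q ` U) i \<and> gs (q ` W) (n - i))"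
    using aU aW geq UX WX by simp
  also have "\<dots> = gs (q ` U \<union> q ` W) n"
    by (rule gs_union[OF inter, symmetric]) (use pU pW in auto)
  finally show "P (alpha X d n) = P (Sup_fin ((\<lambda>i. inf (alpha U d i) (alpha W d (n - i))) ` {..n}))"
    using LHS by simp
qed

end



theorem lemma3p2:
  fixes X U :: "'a set" and d :: "'a \<Rightarrow> 'a \<Rightarrow> 'b::boolean_algebra" and p :: 'a and n :: nat
  assumes "CFG_space X d" and "p \<in> X"
    and "U \<subseteq> X" and "CFG_space U d" and "p \<in> U"
  shows "alpha X d n =
    Sup_fin ((\<lambda>i. inf (alpha U d i) (alpha (orth_compl X d p U) d (n - i))) ` {..n})"
proof -
  obtain SU where SU: "finite SU" "SU \<subseteq> U" "\<forall>x\<in>U. \<exists>n xs a. (\<forall>i\<le>n. xs i \<in> SU) \<and> convex_comb d x n xs a"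
    using assms(4) unfolding CFG_space_def fin_generated_def by blast
  obtain SX where SX: "finite SX" "SX \<subseteq> X" "\<forall>x\<in>X. \<exists>n xs a. (\<forall>i\<le>n. xs i \<in> SX) \<and> convex_comb d x n xs a"
    using assms(1) unfolding CFG_space_def fin_generated_def by blast
  interpret cfg2 X U d p SU SX
  proof
    show "bool_metric X d" "convex_space X d" using assms(1) unfolding CFG_space_def by auto
  qed (use assms SU SX in auto)
  show ?thesis by (rule main)
qed

end
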